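(* Let $\rho\in(0,1)$, $\gamma>0$, $\lambda>0$, and let $$A_{\rho}(\lambda,t)=\frac{\gamma}{\pi}\int_0^{\infty}e^{-rt}\frac{\lambda^2r^{\rho-1}\sin\rho\pi}{(-r+\lambda\gamma r^{\rho}\cos\rho\pi+\lambda)^2+(\lambda\gamma r^{\rho}\sin\rho\pi)^2}dr$$ (the solution of $y'+\lambda(1+\gamma D_t^{\rho})y=0$, $y(0)=1$, with $D_t^\rho$ the Caputo derivative). Then (1) $A_{\rho}(\lambda,0)=1$ and $0<A_{\rho}(\lambda,t)<1$ for $t>0$; (2) $D_tA_{\rho}(\lambda,t)<0$ (for $t>0$).
   Context: $D_t=d/dt$; the Caputo derivative of order $\rho$ is $D_t^{\rho}y(t)=\frac{1}{\Gamma(1-\rho)}\int_0^t\frac{y'(\xi)}{(t-\xi)^{\rho}}d\xi$. *)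

theory Defs
  imports "HOL-Analysis.Analysis"
begin

definition A_rho :: "real \<Rightarrow> real \<Rightarrow> real \<Rightarrow> real \<Rightarrow> real" where
  "A_rho \<rho> \<gamma> lam t =
     \<gamma> / pi * (LBINT r:{0<..}.
        exp (- r * t) * (lam\<^sup>2 * r powr (\<rho> - 1) * sin (\<rho> * pi)) /
        ((- r + lam * \<gamma> * r powr \<rho> * cos (\<rho> * pi) + lam)\<^sup>2
          + (lam * \<gamma> * r powr \<rho> * sin (\<rho> * pi))\<^sup>2))"

end

theory Submission
  imports Defs "HOL-Complex_Analysis.Complex_Analysis" "HOL-Real_Asymp.Real_Asymp"
begin

definition PP :: "real \<Rightarrow> complex \<Rightarrow> complex" where
  "PP \<rho> z = exp (complex_of_real \<rho> * (Ln (-\<i>*z) + \<i> * of_real (pi/2)))"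
definition TH :: "complex \<Rightarrow> real" where
  "TH z = Im (Ln (-\<i>*z)) + pi/2"

lemma polar_TH: assumes "z \<noteq> 0" shows "z = of_real (norm z) * cis (TH z)"
proof -
  have nz: "-\<i>*z \<noteq> 0" using assms by simp
  have "-\<i>*z = exp (Ln (-\<i>*z))" using nz by simp
  also have "\<dots> = of_real (norm z) * cis (Im (Ln (-\<i>*z)))"
    using nz by (simp add: exp_eq_polar Re_Ln norm_mult)
  finally have e: "-\<i>*z = of_real (norm z) * cis (Im (Ln (-\<i>*z)))" .
  have "z = \<i> * (-\<i>*z)" by simp
  also have "\<dots> = of_real (norm z) * (\<i> * cis (Im (Ln (-\<i>*z))))" by (subst e) (simp add: algebra_simps)
  also have "\<i> * cis (Im (Ln (-\<i>*z))) = cis (TH z)"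
    by (simp add: TH_def complex_eq_iff cos_add sin_add)
  finally show ?thesis .
qed

lemma PP_polar: assumes "z \<noteq> 0" shows "PP \<rho> z = of_real (norm z powr \<rho>) * cis (\<rho> * TH z)"
proof -
  have nz: "-\<i>*z \<noteq> 0" using assms by simp
  have "PP \<rho> z = exp (of_real (\<rho> * Re (Ln (-\<i>*z))) + \<i> * of_real (\<rho> * TH z))"
    unfolding PP_def TH_def by (rule arg_cong[where f=exp]) (simp add: complex_eq_iff algebra_simps)
  also have "\<dots> = of_real (exp (\<rho> * Re (Ln (-\<i>*z)))) * cis (\<rho> * TH z)"
    by (subst exp_eq_polar) simp
  also have "exp (\<rho> * Re (Ln (-\<i>*z))) = norm z powr \<rho>"
    using nz by (simp add: Re_Ln norm_mult powr_def)
  finally show ?thesis .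
qed

lemma TH_range: assumes "z \<noteq> 0" "0 \<le> Im z" shows "0 \<le> TH z" "TH z \<le> pi"
proof -
  have "\<bar>Im (Ln (-\<i>*z))\<bar> \<le> pi/2" using Re_Ln_pos_le[of "-\<i>*z"] assms by simp
  then show "0 \<le> TH z" "TH z \<le> pi" unfolding TH_def by auto
qed

lemma TH_pos_real: assumes "0 < r" shows "TH (of_real r) = 0"
proof -
  have "-\<i> * of_real r = exp (of_real (ln r) - \<i> * of_real (pi/2))"
    using assms by (subst exp_eq_polar) (simp add: complex_eq_iff)
  moreover have "Ln (exp (of_real (ln r) - \<i> * of_real (pi/2))) = of_real (ln r) - \<i> * of_real (pi/2)"
    by (rule Ln_exp) (use pi_gt_zero in \<open>auto simp: field_simps\<close>)
  ultimately have "Ln (-\<i> * of_real r) = of_real (ln r) - \<i> * of_real (pi/2)"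
    by simp
  then show ?thesis by (simp add: TH_def)
qed

lemma TH_neg_real: assumes "0 < r" shows "TH (- of_real r) = pi"
proof -
  have "-\<i> * (- of_real r) = exp (of_real (ln r) + \<i> * of_real (pi/2))"
    using assms by (subst exp_eq_polar) (simp add: complex_eq_iff)
  moreover have "Ln (exp (of_real (ln r) + \<i> * of_real (pi/2))) = of_real (ln r) + \<i> * of_real (pi/2)"
    by (rule Ln_exp) (use pi_gt_zero in \<open>auto simp: field_simps\<close>)
  ultimately have "Ln (-\<i> * (- of_real r)) = of_real (ln r) + \<i> * of_real (pi/2)"
    by simp
  then show ?thesis by (simp add: TH_def)
qed


lemma poly5_zero:
  fixes f :: "complex \<Rightarrow> complex"
  assumes cont: "continuous_on S f" and cvx: "convex S"
    and diff: "\<And>x. x \<in> S \<Longrightarrow> f field_differentiable at x"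
    and p: "p1 \<in> S" "p2 \<in> S" "p3 \<in> S" "p4 \<in> S" "p5 \<in> S"
  shows "contour_integral (linepath p1 p2) f + contour_integral (linepath p2 p3) f
       + contour_integral (linepath p3 p4) f + contour_integral (linepath p4 p5) f
       + contour_integral (linepath p5 p1) f = 0"
proof -
  have I: "(f has_contour_integral contour_integral (linepath x y) f) (linepath x y)"
    if "x \<in> S" "y \<in> S" for x y
    by (rule has_contour_integral_integral, rule contour_integrable_continuous_linepath,
        rule continuous_on_subset[OF cont], rule closed_segment_subset[OF that cvx])
  let ?g = "linepath p1 p2 +++ (linepath p2 p3 +++ (linepath p3 p4 +++ (linepath p4 p5 +++ linepath p5 p1)))"
  have "(f has_contour_integral (contour_integral (linepath p1 p2) f + (contour_integral (linepath p2 p3) f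
       + (contour_integral (linepath p3 p4) f + (contour_integral (linepath p4 p5) f
       + contour_integral (linepath p5 p1) f))))) ?g"
    by (intro has_contour_integral_join I p valid_path_join valid_path_linepath) auto
  moreover have "(f has_contour_integral 0) ?g"
  proof (rule Cauchy_theorem_convex[OF cont cvx, of "{}"])
    show "\<And>x. x \<in> interior S - {} \<Longrightarrow> f field_differentiable at x"
      using diff interior_subset by blast
    show "valid_path ?g" by (intro valid_path_join valid_path_linepath) auto
    show "path_image ?g \<subseteq> S"
      using closed_segment_subset[OF _ _ cvx] p by (simp add: path_image_join)
  qed auto
  ultimately show ?thesis using has_contour_integral_unique by (simp add: add.assoc)
qed


definition DEN :: "real \<Rightarrow> real \<Rightarrow> real \<Rightarrow> complex \<Rightarrow> complex" where
  "DEN \<rho> a b z = z + of_real a + of_real b * PP \<rho> z"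
definition HH :: "real \<Rightarrow> real \<Rightarrow> real \<Rightarrow> complex \<Rightarrow> complex" where
  "HH \<rho> a b z = 1 / (z * DEN \<rho> a b z)"

lemma Im_aux: assumes "0 < r" shows "Im (- 1 / (of_real r * Complex X Y)) = Y / (r * (X\<^sup>2 + Y\<^sup>2))"
proof -
  have "of_real r * Complex X Y = Complex (r*X) (r*Y)" by (simp add: complex_eq_iff)
  then have "Im (- 1 / (of_real r * Complex X Y)) = r*Y / ((r*X)\<^sup>2 + (r*Y)\<^sup>2)"
    by (simp add: Im_divide)
  also have "\<dots> = (r*Y) / (r * (r * (X\<^sup>2 + Y\<^sup>2)))" by (simp add: power2_eq_square algebra_simps)
  also have "\<dots> = Y / (r * (X\<^sup>2 + Y\<^sup>2))" using assms by simp
  finally show ?thesis .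
qed

lemma norm_PP: "z \<noteq> 0 \<Longrightarrow> norm (PP \<rho> z) = norm z powr \<rho>"
  by (simp add: PP_polar norm_mult)

context
  fixes \<rho> a b :: real
  assumes rho: "0 < \<rho>" "\<rho> < 1" and ab: "0 < a" "0 < b"
begin

lemma DEN_polar: assumes "z \<noteq> 0"
  shows "Im (DEN \<rho> a b z) = norm z * sin (TH z) + b * (norm z powr \<rho> * sin (\<rho> * TH z))"
    "Re (DEN \<rho> a b z) = norm z * cos (TH z) + a + b * (norm z powr \<rho> * cos (\<rho> * TH z))"
proof -
  have z: "z = of_real (norm z) * cis (TH z)" by (rule polar_TH[OF assms])
  show "Im (DEN \<rho> a b z) = norm z * sin (TH z) + b * (norm z powr \<rho> * sin (\<rho> * TH z))"
    unfolding DEN_def PP_polar[OF assms] by (subst (1) z) simp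
  show "Re (DEN \<rho> a b z) = norm z * cos (TH z) + a + b * (norm z powr \<rho> * cos (\<rho> * TH z))"
    unfolding DEN_def PP_polar[OF assms] by (subst (1) z) simp
qed

lemma DEN_nz: assumes "z \<noteq> 0" "0 \<le> Im z" shows "DEN \<rho> a b z \<noteq> 0"
proof (cases "TH z = 0")
  case True
  have "norm z powr \<rho> > 0" "norm z > 0" using assms by auto
  then have "b * norm z powr \<rho> > 0" using ab by simp
  moreover have "Re (DEN \<rho> a b z) = norm z + a + b * norm z powr \<rho>"
    by (simp add: DEN_polar[OF assms(1)] True)
  ultimately have "Re (DEN \<rho> a b z) > 0"
    using ab \<open>norm z > 0\<close> by linarith
  then show ?thesis by auto
next
  case False
  then have t: "0 < TH z" "TH z \<le> pi" using TH_range[OF assms] by auto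
  have "sin (TH z) \<ge> 0" using t by (intro sin_ge_zero) auto
  moreover have rt: "\<rho> * TH z < 1 * TH z" using t rho by (intro mult_strict_right_mono) auto
  have "sin (\<rho> * TH z) > 0"
  proof (rule sin_gt_zero)
    show "0 < \<rho> * TH z" using t rho by simp
    show "\<rho> * TH z < pi" using t rt by linarith
  qed
  moreover have "norm z powr \<rho> > 0" using assms by simp
  ultimately have "b * (norm z powr \<rho> * sin (\<rho> * TH z)) > 0" "norm z * sin (TH z) \<ge> 0"
    using ab by auto
  then have "Im (DEN \<rho> a b z) > 0"
    using assms by (simp add: DEN_polar)
  then show ?thesis by auto
qed

lemma HH_diff: assumes "z \<noteq> 0" "0 \<le> Im z" shows "HH \<rho> a b field_differentiable at z"
proof -
  have nr: "-\<i>*z \<notin> \<real>\<^sub>\<le>\<^sub>0" using assms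
    by (auto simp: complex_nonpos_Reals_iff complex_eq_iff)
  have L: "(\<lambda>z. Ln (-\<i>*z)) field_differentiable at z"
    using field_differentiable_compose[of "\<lambda>z. -\<i>*z" z Ln] field_differentiable_at_Ln[OF nr]
    using field_differentiable_minus[OF field_differentiable_linear[of "\<i>"]]
    by (simp add: o_def)
  have E: "(\<lambda>z. exp (of_real \<rho> * (Ln (-\<i>*z) + \<i> * of_real (pi/2)))) field_differentiable at z"
  proof -
    have I: "(\<lambda>z. of_real \<rho> * (Ln (-\<i>*z) + \<i> * of_real (pi/2))) field_differentiable at z"
      by (intro field_differentiable_mult field_differentiable_add field_differentiable_const L)
    show ?thesis
      using field_differentiable_compose[OF I field_differentiable_within_exp]
      by (simp add: o_def)
  qed
  have P: "PP \<rho> field_differentiable at z"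
    using E unfolding PP_def[abs_def] .
  have "DEN \<rho> a b z \<noteq> 0" by (rule DEN_nz[OF assms])
  then show ?thesis
    unfolding HH_def[abs_def] DEN_def[abs_def] using P assms
    by (intro field_differentiable_divide field_differentiable_mult field_differentiable_add
          field_differentiable_const field_differentiable_ident) auto
qed

lemma HH_cont: "continuous_on {z. 0 \<le> Im z \<and> z \<noteq> 0} (HH \<rho> a b)"
  by (rule continuous_at_imp_continuous_on) (auto intro: field_differentiable_imp_continuous_at HH_diff)

lemma HH_pos_real: assumes "0 < r" shows "Im (HH \<rho> a b (of_real r)) = 0"
proof -
  have "PP \<rho> (of_real r) = of_real (r powr \<rho>)"
    using assms by (simp add: PP_polar TH_pos_real)
  then show ?thesis by (simp add: HH_def DEN_def)
qed

definition "phi r = b * r powr (\<rho> - 1) * sin (\<rho> * pi) /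
   ((- r + b * r powr \<rho> * cos (\<rho> * pi) + a)\<^sup>2 + (b * r powr \<rho> * sin (\<rho> * pi))\<^sup>2)"

lemma HH_neg_real: assumes "0 < r" shows "Im (HH \<rho> a b (- of_real r)) = phi r"
proof -
  have P: "PP \<rho> (- of_real r) = of_real (r powr \<rho>) * cis (\<rho> * pi)"
    using assms by (simp add: PP_polar TH_neg_real)
  define D where "D = DEN \<rho> a b (- of_real r)"
  have D: "D = Complex (- r + b * r powr \<rho> * cos (\<rho> * pi) + a) (b * r powr \<rho> * sin (\<rho> * pi))"
    unfolding D_def DEN_def P by (simp add: complex_eq_iff)
  have "HH \<rho> a b (- of_real r) = - 1 / (of_real r * D)"
    by (simp add: HH_def D_def)
  also have "Im \<dots> = b * r powr \<rho> * sin (\<rho> * pi) / (r * ((- r + b * r powr \<rho> * cos (\<rho> * pi) + a)\<^sup>2 + (b * r powr \<rho> * sin (\<rho> * pi))\<^sup>2))"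
    unfolding D using assms by (rule Im_aux)
  also have "\<dots> = phi r"
    using assms by (simp add: phi_def powr_diff field_simps)
  finally show ?thesis .
qed

end


context
  fixes \<rho> a b :: real
  assumes rho: "0 < \<rho>" "\<rho> < 1" and ab: "0 < a" "0 < b"
begin

lemma norm_rest: "norm (of_real a + of_real b * PP \<rho> z) \<le> a + b * norm z powr \<rho>" if "z \<noteq> 0"
proof -
  have "norm (of_real a + of_real b * PP \<rho> z) \<le> norm (of_real a :: complex) + norm (of_real b * PP \<rho> z)"
    by (rule norm_triangle_ineq)
  also have "\<dots> = a + b * norm z powr \<rho>" using ab that by (simp add: norm_mult norm_PP)
  finally show ?thesis .
qed

lemma HH_big: assumes R: "0 < R" "R \<le> norm z" and c: "a/R + b * R powr (\<rho>-1) \<le> 1/2"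
  shows "norm (HH \<rho> a b z) \<le> 2 / R\<^sup>2"
proof -
  define n where "n = norm z"
  have n: "0 < n" "R \<le> n" using R by (auto simp: n_def)
  have z: "z \<noteq> 0" using n by (auto simp: n_def)
  have p1: "n powr \<rho> = n * n powr (\<rho> - 1)"
    using n by (simp add: powr_diff)
  have p2: "n powr (\<rho> - 1) \<le> R powr (\<rho> - 1)"
    using n R rho by (intro powr_mono2') auto
  have "a \<le> n * (a/R)" using n R ab by (simp add: field_simps)
  moreover have "b * n powr \<rho> \<le> n * (b * R powr (\<rho>-1))"
    unfolding p1 using p2 n ab by (simp add: mult_left_mono)
  ultimately have "a + b * n powr \<rho> \<le> n * (a/R + b * R powr (\<rho>-1))" by (simp add: algebra_simps)
  also have "\<dots> \<le> n * (1/2)" using c n by (intro mult_left_mono) auto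
  finally have q: "a + b * n powr \<rho> \<le> n / 2" by simp
  have "norm (DEN \<rho> a b z) \<ge> norm z - norm (of_real a + of_real b * PP \<rho> z)"
    unfolding DEN_def using norm_diff_ineq[of z "of_real a + of_real b * PP \<rho> z"]
    by (simp add: add.assoc)
  then have D: "norm (DEN \<rho> a b z) \<ge> n / 2" using norm_rest[OF z] q by (simp add: n_def)
  have "norm (HH \<rho> a b z) = 1 / (n * norm (DEN \<rho> a b z))"
    by (simp add: HH_def norm_divide norm_mult n_def)
  also have "\<dots> \<le> 1 / (n * (n/2))"
    using D n by (intro divide_left_mono mult_left_mono mult_pos_pos) auto
  also have "\<dots> \<le> 1 / (R * (R/2))"
    using n R by (intro divide_left_mono mult_mono mult_pos_pos) auto
  also have "\<dots> = 2 / R\<^sup>2" by (simp add: power2_eq_square)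
  finally show ?thesis .
qed

lemma HH_small: assumes e: "0 < e" "e/2 \<le> norm z" "norm z \<le> e" and c: "e + b * e powr \<rho> \<le> a/2"
  shows "norm (HH \<rho> a b z - 1 / (of_real a * z)) \<le> 2 * (1 + b * (e/2) powr (\<rho> - 1)) / a\<^sup>2"
proof -
  define n where "n = norm z"
  have n: "0 < n" "e/2 \<le> n" "n \<le> e" using e by (auto simp: n_def)
  have z: "z \<noteq> 0" using n by (auto simp: n_def)
  have "n powr \<rho> \<le> e powr \<rho>" using n rho by (intro powr_mono2) auto
  then have "b * n powr \<rho> \<le> b * e powr \<rho>" using ab by (intro mult_left_mono) auto
  then have q: "n + b * n powr \<rho> \<le> a / 2" using c n by linarith
  have "norm (DEN \<rho> a b z) \<ge> norm (of_real a :: complex) - norm (z + of_real b * PP \<rho> z)"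
    unfolding DEN_def using norm_diff_ineq[of "of_real a" "z + of_real b * PP \<rho> z"]
    by (simp add: algebra_simps)
  moreover have N: "norm (z + of_real b * PP \<rho> z) \<le> n + b * n powr \<rho>"
    using norm_triangle_ineq[of z "of_real b * PP \<rho> z"] ab z by (simp add: norm_mult norm_PP n_def)
  ultimately have D: "norm (DEN \<rho> a b z) \<ge> a / 2" using q ab by simp
  have Dnz: "DEN \<rho> a b z \<noteq> 0" using D ab by auto
  have eq: "HH \<rho> a b z - 1 / (of_real a * z) = - (z + of_real b * PP \<rho> z) / (of_real a * z * DEN \<rho> a b z)"
  proof -
    have "HH \<rho> a b z - 1 / (of_real a * z) = (of_real a - DEN \<rho> a b z) / (of_real a * z * DEN \<rho> a b z)"
      unfolding HH_def using Dnz z ab by (simp add: divide_simps)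
    also have "of_real a - DEN \<rho> a b z = - (z + of_real b * PP \<rho> z)" by (simp add: DEN_def)
    finally show ?thesis .
  qed
  have "norm (HH \<rho> a b z - 1 / (of_real a * z)) = norm (z + of_real b * PP \<rho> z) / (a * n * norm (DEN \<rho> a b z))"
  proof -
    have "norm (HH \<rho> a b z - 1 / (of_real a * z)) = norm (- (z + of_real b * PP \<rho> z)) / norm (of_real a * z * DEN \<rho> a b z)"
      unfolding eq by (rule norm_divide)
    also have "\<dots> = norm (z + of_real b * PP \<rho> z) / (a * n * norm (DEN \<rho> a b z))"
      unfolding norm_minus_cancel norm_mult n_def using ab by simp
    finally show ?thesis .
  qed
  also have "\<dots> \<le> (n + b * n powr \<rho>) / (a * n * (a/2))"
  proof (rule frac_le)
    show "0 \<le> n + b * n powr \<rho>" using n ab by simp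
    show "norm (z + of_real b * PP \<rho> z) \<le> n + b * n powr \<rho>" by (rule N)
    show "0 < a * n * (a/2)" using n ab by simp
    show "a * n * (a/2) \<le> a * n * norm (DEN \<rho> a b z)" using n ab D by (intro mult_left_mono) auto
  qed
  also have "\<dots> = 2 * (1 + b * n powr (\<rho> - 1)) / a\<^sup>2"
  proof -
    have p1: "n powr \<rho> = n * n powr (\<rho> - 1)" using n by (simp add: powr_diff)
    have gen: "(n + b * (n * X)) / (a * n * (a/2)) = 2 * (1 + b * X) / a\<^sup>2" for X
      using n ab by (simp add: field_simps power2_eq_square)
    show ?thesis unfolding p1 by (rule gen)
  qed
  also have "\<dots> \<le> 2 * (1 + b * (e/2) powr (\<rho> - 1)) / a\<^sup>2"
  proof -
    have "n powr (\<rho> - 1) \<le> (e/2) powr (\<rho> - 1)" using n rho e by (intro powr_mono2') auto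
    then have "b * n powr (\<rho> - 1) \<le> b * (e/2) powr (\<rho> - 1)" using ab by (intro mult_left_mono) auto
    then show ?thesis using ab by (intro divide_right_mono) auto
  qed
  finally show ?thesis .
qed

end


lemma cvx_d1: "convex {z::complex. e \<le> Im z - Re z}"
proof -
  have "{z::complex. e \<le> Im z - Re z} = {x. inner (Complex (-1) 1) x \<ge> e}"
    by (auto simp: inner_complex_def)
  then show ?thesis using convex_halfspace_ge by metis
qed

lemma cvx_d2: "convex {z::complex. e \<le> Im z + Re z}"
proof -
  have "{z::complex. e \<le> Im z + Re z} = {x. inner (Complex 1 1) x \<ge> e}"
    by (auto simp: inner_complex_def)
  then show ?thesis using convex_halfspace_ge by metis
qed

lemma lin5:
  fixes A1 A2 A3 A4 A5 B1 B2 B3 B4 B5 :: complex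
  assumes "A1+A2+A3+A4+A5 = 0" "B1+B2+B3+B4+B5 = 0" "B4 = -A3"
  shows "A1 + (A2 + B5) + B1 + (B2 + B3 + A4 + A5) = 0"
proof -
  have "A1 + (A2 + B5) + B1 + (B2 + B3 + A4 + A5) = (A1+A2+A3+A4+A5) + (B1+B2+B3+B4+B5) - (B4 + A3)"
    by (simp add: algebra_simps)
  also have "\<dots> = 0" unfolding assms(1) assms(2) using assms(3) by simp
  finally show ?thesis .
qed

lemma Ln_mii_pos: assumes "0 < r" shows "Ln (-\<i> * of_real r) = of_real (ln r) - \<i> * of_real (pi/2)"
proof -
  have "-\<i> * of_real r = exp (of_real (ln r) - \<i> * of_real (pi/2))"
    using assms by (subst exp_eq_polar) (simp add: complex_eq_iff)
  moreover have "Ln (exp (of_real (ln r) - \<i> * of_real (pi/2))) = of_real (ln r) - \<i> * of_real (pi/2)"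
    by (rule Ln_exp) (use pi_gt_zero in \<open>auto simp: field_simps\<close>)
  ultimately show ?thesis by simp
qed

lemma Ln_mii_neg: assumes "0 < r" shows "Ln (-\<i> * (- of_real r)) = of_real (ln r) + \<i> * of_real (pi/2)"
proof -
  have "-\<i> * (- of_real r) = exp (of_real (ln r) + \<i> * of_real (pi/2))"
    using assms by (subst exp_eq_polar) (simp add: complex_eq_iff)
  moreover have "Ln (exp (of_real (ln r) + \<i> * of_real (pi/2))) = of_real (ln r) + \<i> * of_real (pi/2)"
    by (rule Ln_exp) (use pi_gt_zero in \<open>auto simp: field_simps\<close>)
  ultimately show ?thesis by simp
qed

lemma deriv_Lnmii: assumes "z \<noteq> 0" "0 \<le> Im z" "a \<noteq> 0"
  shows "((\<lambda>z. Ln (-\<i>*z) / of_real a) has_field_derivative 1 / (of_real a * z)) (at z)"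
proof -
  have nr: "-\<i>*z \<notin> \<real>\<^sub>\<le>\<^sub>0" using assms
    by (auto simp: complex_nonpos_Reals_iff complex_eq_iff)
  have l: "((\<lambda>z. -\<i>*z) has_field_derivative -\<i>) (at z)"
    by (auto intro!: derivative_eq_intros)
  have "((\<lambda>z. Ln (-\<i>*z)) has_field_derivative inverse (-\<i>*z) * (-\<i>)) (at z)"
    by (rule DERIV_chain2[OF has_field_derivative_Ln[OF nr] l])
  then have "((\<lambda>z. Ln (-\<i>*z) / of_real a) has_field_derivative inverse (-\<i>*z) * (-\<i>) / of_real a) (at z)"
    by (rule DERIV_cdivide)
  moreover have "inverse (-\<i>*z) * (-\<i>) / of_real a = 1 / (of_real a * z)"
    using assms by (simp add: field_simps)
  ultimately show ?thesis by simp
qed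

context
  fixes \<rho> a b :: real
  assumes rho: "0 < \<rho>" "\<rho> < 1" and ab: "0 < a" "0 < b"
begin

abbreviation "CI p q \<equiv> contour_integral (linepath p q) (HH \<rho> a b)"

lemma loop_identity:
  assumes e: "0 < e" "e < R"
  shows "CI (- of_real R) (- of_real e) + (CI (- of_real e) (\<i> * of_real e) + CI (\<i> * of_real e) (of_real e))
        + CI (of_real e) (of_real R)
        + (CI (of_real R) (of_real R + \<i> * of_real R) + CI (of_real R + \<i> * of_real R) (\<i> * of_real R)
           + CI (\<i> * of_real R) (- of_real R + \<i> * of_real R) + CI (- of_real R + \<i> * of_real R) (- of_real R)) = 0"
proof -
  define SL where "SL = {z. 0 \<le> Im z} \<inter> {z. Re z \<le> 0} \<inter> {z::complex. e \<le> Im z - Re z}"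
  define SR where "SR = {z. 0 \<le> Im z} \<inter> {z. 0 \<le> Re z} \<inter> {z::complex. e \<le> Im z + Re z}"
  have cL: "convex SL" unfolding SL_def
    by (intro convex_Int convex_halfspace_Im_ge convex_halfspace_Re_le cvx_d1)
  have cR: "convex SR" unfolding SR_def
    by (intro convex_Int convex_halfspace_Im_ge convex_halfspace_Re_ge cvx_d2)
  have subL: "SL \<subseteq> {z. 0 \<le> Im z \<and> z \<noteq> 0}" using e by (auto simp: SL_def)
  have subR: "SR \<subseteq> {z. 0 \<le> Im z \<and> z \<noteq> 0}" using e by (auto simp: SR_def)
  have dL: "HH \<rho> a b field_differentiable at x" if "x \<in> SL" for x
    using subL that HH_diff[OF rho ab] by auto
  have dR: "HH \<rho> a b field_differentiable at x" if "x \<in> SR" for x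
    using subR that HH_diff[OF rho ab] by auto
  have L: "CI (- of_real R) (- of_real e) + CI (- of_real e) (\<i> * of_real e) + CI (\<i> * of_real e) (\<i> * of_real R)
        + CI (\<i> * of_real R) (- of_real R + \<i> * of_real R) + CI (- of_real R + \<i> * of_real R) (- of_real R) = 0"
    by (rule poly5_zero[OF continuous_on_subset[OF HH_cont[OF rho ab] subL] cL dL])
       (use e in \<open>auto simp: SL_def\<close>)
  have Rr: "CI (of_real e) (of_real R) + CI (of_real R) (of_real R + \<i> * of_real R)
        + CI (of_real R + \<i> * of_real R) (\<i> * of_real R) + CI (\<i> * of_real R) (\<i> * of_real e)
        + CI (\<i> * of_real e) (of_real e) = 0"
    by (rule poly5_zero[OF continuous_on_subset[OF HH_cont[OF rho ab] subR] cR dR])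
       (use e in \<open>auto simp: SR_def\<close>)
  have seg: "closed_segment (\<i> * of_real e) (\<i> * of_real R) \<subseteq> SL"
    by (rule closed_segment_subset[OF _ _ cL]) (use e in \<open>auto simp: SL_def\<close>)
  have rev: "CI (\<i> * of_real R) (\<i> * of_real e) = - CI (\<i> * of_real e) (\<i> * of_real R)"
    using contour_integral_reverse_linepath[OF continuous_on_subset[OF HH_cont[OF rho ab] order.trans[OF seg subL]]]
    by simp
  show ?thesis using lin5[OF L Rr rev] .
qed


lemma seg_small:
  assumes Q: "convex Q" "Q \<subseteq> {z. 0 \<le> Im z \<and> e/2 \<le> norm z \<and> norm z \<le> e}" "p \<in> Q" "q \<in> Q"
    and e: "0 < e" and c: "e + b * e powr \<rho> \<le> a/2"
  shows "norm (CI p q - (Ln (-\<i>*q) / of_real a - Ln (-\<i>*p) / of_real a))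
         \<le> 2 * (1 + b * (e/2) powr (\<rho> - 1)) / a\<^sup>2 * norm (q - p)"
proof -
  have seg: "closed_segment p q \<subseteq> Q" by (rule closed_segment_subset[OF Q(3,4,1)])
  have U: "closed_segment p q \<subseteq> {z. 0 \<le> Im z \<and> z \<noteq> 0}" using seg Q(2) e by fastforce
  have H: "(HH \<rho> a b has_contour_integral CI p q) (linepath p q)"
    by (rule has_contour_integral_integral, rule contour_integrable_continuous_linepath,
        rule continuous_on_subset[OF HH_cont[OF rho ab] U])
  have F: "((\<lambda>z. 1 / (of_real a * z)) has_contour_integral
           (Ln (-\<i>*pathfinish (linepath p q)) / of_real a - Ln (-\<i>*pathstart (linepath p q)) / of_real a)) (linepath p q)"
  proof (rule contour_integral_primitive[where S = "closed_segment p q" and f = "\<lambda>z. Ln (-\<i>*z) / of_real a"])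
    fix x assume "x \<in> closed_segment p q"
    then have "x \<noteq> 0" "0 \<le> Im x" using U by auto
    moreover have "a \<noteq> 0" using ab by simp
    ultimately have d: "((\<lambda>z. Ln (-\<i>*z) / of_real a) has_field_derivative 1 / (of_real a * x)) (at x)"
      by (rule deriv_Lnmii)
    show "((\<lambda>z. Ln (-\<i>*z) / of_real a) has_field_derivative 1 / (of_real a * x)) (at x within closed_segment p q)"
      by (rule has_field_derivative_at_within[OF d])
  qed auto
  have D: "((\<lambda>z. HH \<rho> a b z - 1 / (of_real a * z)) has_contour_integral
            (CI p q - (Ln (-\<i>*q) / of_real a - Ln (-\<i>*p) / of_real a))) (linepath p q)"
    using has_contour_integral_diff[OF H F] by simp
  show ?thesis
  proof (rule has_contour_integral_bound_linepath[OF D])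
    show "0 \<le> 2 * (1 + b * (e/2) powr (\<rho> - 1)) / a\<^sup>2" using ab by simp
    fix z assume "z \<in> closed_segment p q"
    then have "z \<in> Q" using seg by auto
    then have "e/2 \<le> norm z" "norm z \<le> e" using Q(2) by auto
    then show "norm (HH \<rho> a b z - 1 / (of_real a * z)) \<le> 2 * (1 + b * (e/2) powr (\<rho> - 1)) / a\<^sup>2"
      using HH_small[OF rho ab e _ _ c] by simp
  qed
qed

lemma seg_big:
  assumes Q: "convex Q" "Q \<subseteq> {z. 0 \<le> Im z \<and> R \<le> norm z}" "p \<in> Q" "q \<in> Q"
    and R: "0 < R" and c: "a/R + b * R powr (\<rho>-1) \<le> 1/2"
  shows "norm (CI p q) \<le> 2 / R\<^sup>2 * norm (q - p)"
proof -
  have seg: "closed_segment p q \<subseteq> Q" by (rule closed_segment_subset[OF Q(3,4,1)])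
  have U: "closed_segment p q \<subseteq> {z. 0 \<le> Im z \<and> z \<noteq> 0}" using seg Q(2) R by fastforce
  have H: "(HH \<rho> a b has_contour_integral CI p q) (linepath p q)"
    by (rule has_contour_integral_integral, rule contour_integrable_continuous_linepath,
        rule continuous_on_subset[OF HH_cont[OF rho ab] U])
  show ?thesis
  proof (rule has_contour_integral_bound_linepath[OF H])
    show "0 \<le> 2 / R\<^sup>2" by simp
    fix z assume "z \<in> closed_segment p q"
    then have "R \<le> norm z" using seg Q(2) by auto
    then show "norm (HH \<rho> a b z) \<le> 2 / R\<^sup>2" using HH_big[OF rho ab R _ c] by simp
  qed
qed

lemma real_neg_part: assumes "0 < e" "e < R"
  shows "Im (CI (- of_real R) (- of_real e)) = integral {e..R} (phi \<rho> a b)"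
proof -
  have "CI (- of_real R) (- of_real e) = integral {-R..-e} (\<lambda>x. HH \<rho> a b (of_real x))"
    using contour_integral_linepath_Reals_eq[of "- of_real R" "- of_real e" "HH \<rho> a b"] assms by simp
  also have "\<dots> = integral {e..R} (\<lambda>x. HH \<rho> a b (- of_real x))"
    using Henstock_Kurzweil_Integration.integral_reflect_real[of R e "\<lambda>x. HH \<rho> a b (- of_real x)"] by simp
  finally have eq: "CI (- of_real R) (- of_real e) = integral {e..R} (\<lambda>x. HH \<rho> a b (- of_real x))" .
  have "continuous_on {e..R} (\<lambda>x. HH \<rho> a b (- of_real x))"
    by (rule continuous_on_compose2[OF HH_cont[OF rho ab]]) (use assms in \<open>auto intro!: continuous_intros\<close>)
  then have "(\<lambda>x. HH \<rho> a b (- of_real x)) integrable_on {e..R}" by (rule integrable_continuous_interval)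
  from has_integral_Im[OF integrable_integral[OF this]]
  have "integral {e..R} (\<lambda>x. Im (HH \<rho> a b (- of_real x))) = Im (integral {e..R} (\<lambda>x. HH \<rho> a b (- of_real x)))"
    by (rule integral_unique)
  moreover have "integral {e..R} (\<lambda>x. Im (HH \<rho> a b (- of_real x))) = integral {e..R} (phi \<rho> a b)"
    by (rule integral_cong) (use assms HH_neg_real[OF rho ab] in auto)
  ultimately show ?thesis using eq by simp
qed

lemma real_pos_part: assumes "0 < e" "e < R"
  shows "Im (CI (of_real e) (of_real R)) = 0"
proof -
  have eq: "CI (of_real e) (of_real R) = integral {e..R} (\<lambda>x. HH \<rho> a b (of_real x))"
    using contour_integral_linepath_Reals_eq[of "of_real e" "of_real R" "HH \<rho> a b"] assms by simp
  have "continuous_on {e..R} (\<lambda>x. HH \<rho> a b (of_real x))"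
    by (rule continuous_on_compose2[OF HH_cont[OF rho ab]]) (use assms in \<open>auto intro!: continuous_intros\<close>)
  then have "(\<lambda>x. HH \<rho> a b (of_real x)) integrable_on {e..R}" by (rule integrable_continuous_interval)
  from has_integral_Im[OF integrable_integral[OF this]]
  have "integral {e..R} (\<lambda>x. Im (HH \<rho> a b (of_real x))) = Im (integral {e..R} (\<lambda>x. HH \<rho> a b (of_real x)))"
    by (rule integral_unique)
  moreover have "integral {e..R} (\<lambda>x. Im (HH \<rho> a b (of_real x))) = integral {e..R} (\<lambda>x. 0)"
    by (rule integral_cong) (use assms HH_pos_real[OF rho ab] in auto)
  ultimately show ?thesis using eq by simp
qed

end


context
  fixes \<rho> a b :: real
  assumes rho: "0 < \<rho>" "\<rho> < 1" and ab: "0 < a" "0 < b"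
begin

lemma key_bound:
  assumes e: "0 < e" "e < R" and cR: "a/R + b * R powr (\<rho>-1) \<le> 1/2"
    and ce: "e + b * e powr \<rho> \<le> a/2"
  shows "\<bar>integral {e..R} (phi \<rho> a b) - pi/a\<bar> \<le> 8/R + 4 * e * (2 * (1 + b * (e/2) powr (\<rho> - 1)) / a\<^sup>2)"
proof -
  define K where "K = 2 * (1 + b * (e/2) powr (\<rho> - 1)) / a\<^sup>2"
  have K0: "0 \<le> K" using ab by (simp add: K_def)
  define F where "F = (\<lambda>z. Ln (-\<i>*z) / of_real a)"
  let ?A = "CI \<rho> a b (- of_real R) (- of_real e)"
  let ?G1 = "CI \<rho> a b (- of_real e) (\<i> * of_real e)"
  let ?G2 = "CI \<rho> a b (\<i> * of_real e) (of_real e)"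
  let ?P = "CI \<rho> a b (of_real e) (of_real R)"
  let ?E1 = "CI \<rho> a b (of_real R) (of_real R + \<i> * of_real R)"
  let ?E2 = "CI \<rho> a b (of_real R + \<i> * of_real R) (\<i> * of_real R)"
  let ?E3 = "CI \<rho> a b (\<i> * of_real R) (- of_real R + \<i> * of_real R)"
  let ?E4 = "CI \<rho> a b (- of_real R + \<i> * of_real R) (- of_real R)"
  have loop: "?A + (?G1 + ?G2) + ?P + (?E1 + ?E2 + ?E3 + ?E4) = 0"
    by (rule loop_identity[OF rho ab e])
  have R0: "0 < R" using e by simp
  have nsm: "e \<le> 2 * norm z" if "e \<le> Im z - Re z \<or> e \<le> Im z + Re z" for z :: complex
    using that abs_Re_le_cmod[of z] abs_Im_le_cmod[of z] by linarith
  define Q1 where "Q1 = {z. 0 \<le> Im z} \<inter> {z::complex. e \<le> Im z - Re z} \<inter> cball 0 e"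
  define Q2 where "Q2 = {z. 0 \<le> Im z} \<inter> {z::complex. e \<le> Im z + Re z} \<inter> cball 0 e"
  have cQ1: "convex Q1" unfolding Q1_def by (intro convex_Int convex_halfspace_Im_ge cvx_d1 convex_cball)
  have cQ2: "convex Q2" unfolding Q2_def by (intro convex_Int convex_halfspace_Im_ge cvx_d2 convex_cball)
  have sQ1: "Q1 \<subseteq> {z. 0 \<le> Im z \<and> e/2 \<le> norm z \<and> norm z \<le> e}"
    unfolding Q1_def using nsm by fastforce
  have sQ2: "Q2 \<subseteq> {z. 0 \<le> Im z \<and> e/2 \<le> norm z \<and> norm z \<le> e}"
    unfolding Q2_def using nsm by fastforce
  have g1: "norm (?G1 - (F (\<i> * of_real e) - F (- of_real e))) \<le> K * norm (\<i> * of_real e - - of_real e)"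
    unfolding F_def K_def
    by (rule seg_small[OF rho ab cQ1 sQ1 _ _ e(1) ce]) (use e in \<open>auto simp: Q1_def norm_mult\<close>)
  have g2: "norm (?G2 - (F (of_real e) - F (\<i> * of_real e))) \<le> K * norm (of_real e - \<i> * of_real e)"
    unfolding F_def K_def
    by (rule seg_small[OF rho ab cQ2 sQ2 _ _ e(1) ce]) (use e in \<open>auto simp: Q2_def norm_mult\<close>)
  have l1: "norm (\<i> * of_real e - - of_real e) \<le> 2 * e"
    using norm_triangle_ineq[of "\<i> * of_real e" "of_real e :: complex"] e by (simp add: norm_mult)
  have l2: "norm (of_real e - \<i> * of_real e) \<le> 2 * e"
    using norm_triangle_ineq4[of "of_real e :: complex" "\<i> * of_real e"] e by (simp add: norm_mult)
  have Fd: "F (of_real e) - F (- of_real e) = - \<i> * of_real pi / of_real a"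
  proof -
    have "F (of_real e) - F (- of_real e) = ((of_real (ln e) - \<i> * of_real (pi/2)) - (of_real (ln e) + \<i> * of_real (pi/2))) / of_real a"
      by (simp only: F_def Ln_mii_pos[OF e(1)] Ln_mii_neg[OF e(1)] diff_divide_distrib)
    also have "\<dots> = - \<i> * of_real pi / of_real a" by (simp add: algebra_simps)
    finally show ?thesis .
  qed
  have "norm ((?G1 + ?G2) - (- \<i> * of_real pi / of_real a))
      = norm ((?G1 - (F (\<i> * of_real e) - F (- of_real e))) + (?G2 - (F (of_real e) - F (\<i> * of_real e))))"
    by (simp only: Fd[symmetric]) (simp add: algebra_simps)
  also have "\<dots> \<le> norm (?G1 - (F (\<i> * of_real e) - F (- of_real e))) + norm (?G2 - (F (of_real e) - F (\<i> * of_real e)))"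
    by (rule norm_triangle_ineq)
  also have "\<dots> \<le> K * (2 * e) + K * (2 * e)"
    using g1 g2 l1 l2 K0 by (smt (verit) mult_left_mono)
  finally have G: "norm ((?G1 + ?G2) + \<i> * of_real pi / of_real a) \<le> 4 * e * K" by (simp add: algebra_simps)
  have aux: "R \<le> Re z \<Longrightarrow> R \<le> cmod z" "R \<le> Im z \<Longrightarrow> R \<le> cmod z" "Re z \<le> -R \<Longrightarrow> R \<le> cmod z" for z
    using abs_Re_le_cmod[of z] abs_Im_le_cmod[of z] by linarith+
  have e1: "norm ?E1 \<le> 2 / R\<^sup>2 * R"
  proof -
    have "norm ?E1 \<le> 2 / R\<^sup>2 * norm ((of_real R + \<i> * of_real R) - of_real R)"
      by (rule seg_big[OF rho ab convex_Int[OF convex_halfspace_Im_ge[of 0] convex_halfspace_Re_ge[of R]] _ _ _ R0 cR])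
        (use e aux in auto)
    then show ?thesis using e by (simp add: norm_mult)
  qed
  have e2: "norm ?E2 \<le> 2 / R\<^sup>2 * R"
  proof -
    have "norm ?E2 \<le> 2 / R\<^sup>2 * norm (\<i> * of_real R - (of_real R + \<i> * of_real R))"
      by (rule seg_big[OF rho ab convex_Int[OF convex_halfspace_Im_ge[of 0] convex_halfspace_Im_ge[of R]] _ _ _ R0 cR])
        (use e aux in auto)
    then show ?thesis using e by (simp add: norm_mult)
  qed
  have e3: "norm ?E3 \<le> 2 / R\<^sup>2 * R"
  proof -
    have "norm ?E3 \<le> 2 / R\<^sup>2 * norm ((- of_real R + \<i> * of_real R) - \<i> * of_real R)"
      by (rule seg_big[OF rho ab convex_Int[OF convex_halfspace_Im_ge[of 0] convex_halfspace_Im_ge[of R]] _ _ _ R0 cR])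
        (use e aux in auto)
    then show ?thesis using e by (simp add: norm_mult)
  qed
  have e4: "norm ?E4 \<le> 2 / R\<^sup>2 * R"
  proof -
    have "norm ?E4 \<le> 2 / R\<^sup>2 * norm (- of_real R - (- of_real R + \<i> * of_real R))"
      by (rule seg_big[OF rho ab convex_Int[OF convex_halfspace_Im_ge[of 0] convex_halfspace_Re_le[of "-R"]] _ _ _ R0 cR])
        (use e aux in auto)
    then show ?thesis using e by (simp add: norm_mult)
  qed
  have "2 / R\<^sup>2 * R = 2 / R" using R0 by (simp add: power2_eq_square)
  then have E: "norm (?E1 + ?E2 + ?E3 + ?E4) \<le> 8 / R"
    using e1 e2 e3 e4 norm_triangle_ineq[of "?E1 + ?E2 + ?E3" ?E4] norm_triangle_ineq[of "?E1 + ?E2" ?E3]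
      norm_triangle_ineq[of ?E1 ?E2] by linarith
  have ImA: "Im ?A = integral {e..R} (phi \<rho> a b)" by (rule real_neg_part[OF rho ab e])
  have ImP: "Im ?P = 0" by (rule real_pos_part[OF rho ab e])
  have "Im ?A = pi / a - Im ((?G1 + ?G2) + \<i> * of_real pi / of_real a) - Im (?E1 + ?E2 + ?E3 + ?E4)"
  proof -
    have "?A = - ((?G1 + ?G2) + \<i> * of_real pi / of_real a) + \<i> * of_real pi / of_real a - ?P - (?E1 + ?E2 + ?E3 + ?E4)"
      using loop by (simp add: algebra_simps eq_neg_iff_add_eq_0)
    then show ?thesis using ImP ab by simp
  qed
  then have "\<bar>integral {e..R} (phi \<rho> a b) - pi/a\<bar> \<le> norm ((?G1 + ?G2) + \<i> * of_real pi / of_real a) + norm (?E1 + ?E2 + ?E3 + ?E4)"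
    using ImA abs_Im_le_cmod[of "(?G1 + ?G2) + \<i> * of_real pi / of_real a"] abs_Im_le_cmod[of "?E1 + ?E2 + ?E3 + ?E4"]
    by linarith
  then show ?thesis using G E by (simp add: K_def algebra_simps)
qed

end


lemma meas_Ioi:
  fixes f :: "real \<Rightarrow> real"
  assumes "continuous_on {0<..} f"
  shows "(\<lambda>x. indicator {0<..} x * f x) \<in> borel_measurable lborel"
  using borel_measurable_continuous_on_indicator[of "{0<..}" f] assms by simp

lemma pos_integral:
  fixes F :: "real \<Rightarrow> real"
  assumes int: "set_integrable lborel {0<..} F" and pos: "\<And>x. x > 0 \<Longrightarrow> F x > 0"
  shows "(LBINT x:{0<..}. F x) > 0"
proof -
  let ?g = "\<lambda>x. indicator {0<..} x * F x"
  have ig: "integrable lborel ?g" using int by (simp add: set_integrable_def)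
  have nn: "AE x in lborel. 0 \<le> ?g x" using pos by (auto simp: indicator_def less_imp_le)
  have ge: "integral\<^sup>L lborel ?g \<ge> 0" by (rule integral_nonneg_AE[OF nn])
  have "integral\<^sup>L lborel ?g \<noteq> 0"
  proof
    assume "integral\<^sup>L lborel ?g = 0"
    then have "AE x in lborel. ?g x = 0" using integral_nonneg_eq_0_iff_AE[OF ig nn] by simp
    then obtain N where N: "{x \<in> space lborel. \<not> ?g x = 0} \<subseteq> N" "emeasure lborel N = 0" "N \<in> sets lborel"
      by (rule AE_E)
    have "{1..2::real} \<subseteq> N"
    proof
      fix x :: real assume "x \<in> {1..2}"
      then have "?g x \<noteq> 0" using pos[of x] by simp
      then show "x \<in> N" using N(1) by auto
    qed
    then have "emeasure lborel {1..2::real} \<le> emeasure lborel N" by (rule emeasure_mono) (use N in auto)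
    then show False using N(2) by simp
  qed
  then show ?thesis using ge unfolding set_lebesgue_integral_def by simp
qed

context
  fixes \<rho> a b :: real
  assumes rho: "0 < \<rho>" "\<rho> < 1" and ab: "0 < a" "0 < b"
begin

lemma phi_pos: "0 < r \<Longrightarrow> 0 < phi \<rho> a b r"
proof -
  assume r: "0 < r"
  have s: "sin (\<rho> * pi) > 0" using rho by (intro sin_gt_zero) auto
  have "b * r powr \<rho> * sin (\<rho> * pi) > 0" using ab r s by simp
  then have "(- r + b * r powr \<rho> * cos (\<rho> * pi) + a)\<^sup>2 + (b * r powr \<rho> * sin (\<rho> * pi))\<^sup>2 > 0"
    by (rule add_nonneg_pos[OF zero_le_power2 zero_less_power])
  moreover have "b * r powr (\<rho> - 1) * sin (\<rho> * pi) > 0" using ab r s by simp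
  ultimately show ?thesis by (simp add: phi_def[OF rho ab])
qed

lemma phi_den_pos: "0 < r \<Longrightarrow> (- r + b * r powr \<rho> * cos (\<rho> * pi) + a)\<^sup>2 + (b * r powr \<rho> * sin (\<rho> * pi))\<^sup>2 > 0"
proof -
  assume r: "0 < r"
  have s: "sin (\<rho> * pi) > 0" using rho by (intro sin_gt_zero) auto
  have "b * r powr \<rho> * sin (\<rho> * pi) > 0" using ab r s by simp
  then show ?thesis by (rule add_nonneg_pos[OF zero_le_power2 zero_less_power])
qed

lemma phi_eq: "phi \<rho> a b = (\<lambda>r. b * r powr (\<rho> - 1) * sin (\<rho> * pi) /
   ((- r + b * r powr \<rho> * cos (\<rho> * pi) + a)\<^sup>2 + (b * r powr \<rho> * sin (\<rho> * pi))\<^sup>2))"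
  by (rule ext) (simp add: phi_def[OF rho ab])

lemma phi_nonneg: "0 < c \<Longrightarrow> c \<le> x \<Longrightarrow> 0 \<le> phi \<rho> a b x"
  using phi_pos[of x] by simp

lemma phi_cont: "continuous_on {0<..} (phi \<rho> a b)"
  unfolding phi_eq
proof (rule continuous_on_divide)
  show "continuous_on {0<..} (\<lambda>r::real. b * r powr (\<rho> - 1) * sin (\<rho> * pi))"
    by (intro continuous_intros) auto
  show "continuous_on {0<..} (\<lambda>r::real. (- r + b * r powr \<rho> * cos (\<rho> * pi) + a)\<^sup>2 + (b * r powr \<rho> * sin (\<rho> * pi))\<^sup>2)"
    by (intro continuous_intros) auto
  show "\<forall>x\<in>{0<..}. (- x + b * x powr \<rho> * cos (\<rho> * pi) + a)\<^sup>2 + (b * x powr \<rho> * sin (\<rho> * pi))\<^sup>2 \<noteq> 0"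
    using phi_den_pos by (metis greaterThan_iff less_irrefl)
qed

lemma phi_cont_Icc: "0 < e \<Longrightarrow> continuous_on {e..R} (phi \<rho> a b)"
  by (rule continuous_on_subset[OF phi_cont]) auto

lemma phi_lim: "(\<lambda>n. integral {1 / real (Suc n) .. real (Suc n)} (phi \<rho> a b)) \<longlonglongrightarrow> pi / a"
proof -
  define g where "g = (\<lambda>n::nat. 8 / real (Suc n) + 4 * (1 / real (Suc n)) * (2 * (1 + b * ((1 / real (Suc n))/2) powr (\<rho> - 1)) / a\<^sup>2))"
  have g0: "g \<longlonglongrightarrow> 0" unfolding g_def using rho ab by real_asymp
  have c1: "eventually (\<lambda>n. a / real (Suc n) + b * real (Suc n) powr (\<rho>-1) \<le> 1/2) sequentially"
  proof -
    have "(\<lambda>n. a / real (Suc n) + b * real (Suc n) powr (\<rho>-1)) \<longlonglongrightarrow> 0" using rho by real_asymp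
    then have "eventually (\<lambda>n. a / real (Suc n) + b * real (Suc n) powr (\<rho>-1) < 1/2) sequentially"
      by (rule order_tendstoD(2)) simp
    then show ?thesis by eventually_elim simp
  qed
  have c2: "eventually (\<lambda>n. 1 / real (Suc n) + b * (1 / real (Suc n)) powr \<rho> \<le> a/2) sequentially"
  proof -
    have "(\<lambda>n. 1 / real (Suc n) + b * (1 / real (Suc n)) powr \<rho>) \<longlonglongrightarrow> 0" using rho by real_asymp
    then have "eventually (\<lambda>n. 1 / real (Suc n) + b * (1 / real (Suc n)) powr \<rho> < a/2) sequentially"
      by (rule order_tendstoD(2)) (use ab in simp)
    then show ?thesis by eventually_elim simp
  qed
  have c3: "eventually (\<lambda>n. 1 / real (Suc n) < real (Suc n)) sequentially"
  proof (rule eventually_sequentiallyI[of 1])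
    fix n :: nat assume "1 \<le> n"
    have "1 / real (Suc n) \<le> 1" by simp
    moreover have "1 < real (Suc n)" using \<open>1 \<le> n\<close> by simp
    ultimately show "1 / real (Suc n) < real (Suc n)" by linarith
  qed
  have "eventually (\<lambda>n. norm (integral {1 / real (Suc n) .. real (Suc n)} (phi \<rho> a b) - pi / a) \<le> g n) sequentially"
    using c1 c2 c3
  proof eventually_elim
    case (elim n)
    show ?case unfolding g_def real_norm_def
      by (rule key_bound[OF rho ab _ elim(3) elim(1) elim(2)]) simp
  qed
  from Lim_null_comparison[OF this g0]
  show ?thesis by (simp add: LIM_zero_iff)
qed

lemma phi_integral: "set_integrable lborel {0<..} (phi \<rho> a b)" "(LBINT x:{0<..}. phi \<rho> a b x) = pi / a"
proof -
  define f where "f = (\<lambda>n::nat. \<lambda>x. indicator {1 / real (Suc n) .. real (Suc n)} x * phi \<rho> a b x)"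
  have int: "integrable lborel (f n)" for n
  proof -
    have "set_integrable lborel {1 / real (Suc n) .. real (Suc n)} (phi \<rho> a b)"
      by (rule borel_integrable_atLeastAtMost'[OF phi_cont_Icc]) simp
    then show ?thesis by (simp add: f_def set_integrable_def)
  qed
  have ieq: "integral\<^sup>L lborel (f n) = integral {1 / real (Suc n) .. real (Suc n)} (phi \<rho> a b)" for n
  proof -
    have "set_integrable lborel {1 / real (Suc n) .. real (Suc n)} (phi \<rho> a b)"
      by (rule borel_integrable_atLeastAtMost'[OF phi_cont_Icc]) simp
    from set_borel_integral_eq_integral(2)[OF this] show ?thesis
      by (simp add: f_def set_lebesgue_integral_def)
  qed
  have mono: "AE x in lborel. mono (\<lambda>n. f n x)"
  proof (rule AE_I2, rule monoI)
    fix x :: real and m n :: nat assume "m \<le> n"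
    then have sub: "{1 / real (Suc m) .. real (Suc m)} \<subseteq> {1 / real (Suc n) .. real (Suc n)}"
      by (auto simp: field_simps intro: order.trans)
    show "f m x \<le> f n x"
    proof (cases "x \<in> {1 / real (Suc m) .. real (Suc m)}")
      case True
      then have "x > 0" by (auto intro: less_le_trans[of 0 "1 / real (Suc m)"])
      then show ?thesis using True sub by (auto simp: f_def)
    next
      case False
      then show ?thesis unfolding f_def
        by (auto simp: indicator_def intro!: phi_nonneg[of "1 / real (Suc n)"])
    qed
  qed
  have pos: "AE x in lborel. 0 \<le> f i x" for i
    by (rule AE_I2) (auto simp: f_def indicator_def intro!: phi_nonneg[of "1 / real (Suc i)"])
  have lim: "AE x in lborel. (\<lambda>i. f i x) \<longlonglongrightarrow> indicator {0<..} x * phi \<rho> a b x"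
  proof (rule AE_I2)
    fix x :: real
    show "(\<lambda>i. f i x) \<longlonglongrightarrow> indicator {0<..} x * phi \<rho> a b x"
    proof (cases "x > 0")
      case True
      have e1: "eventually (\<lambda>i. 1 / real (Suc i) \<le> x) sequentially"
        using order_tendstoD(2)[OF LIMSEQ_inverse_real_of_nat True]
        by eventually_elim (simp add: inverse_eq_divide)
      have e2: "eventually (\<lambda>i. x \<le> real (Suc i)) sequentially"
        using eventually_ge_at_top[of "nat \<lceil>x\<rceil>"] by eventually_elim linarith
      have "eventually (\<lambda>i. f i x = indicator {0<..} x * phi \<rho> a b x) sequentially"
        using e1 e2 by eventually_elim (use True in \<open>simp add: f_def\<close>)
      then show ?thesis by (rule tendsto_eventually)
    next
      case False
      have "f i x = 0" for i
      proof -
        have "0 < 1 / real (Suc i)" by simp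
        then have "\<not> (1 / real (Suc i) \<le> x)" using False by linarith
        then have "x \<notin> {1 / real (Suc i) .. real (Suc i)}" by simp
        then show ?thesis by (simp add: f_def)
      qed
      then show ?thesis using False by simp
    qed
  qed
  have ilim: "(\<lambda>i. integral\<^sup>L lborel (f i)) \<longlonglongrightarrow> pi / a" unfolding ieq by (rule phi_lim)
  have u: "(\<lambda>x. indicator {0<..} x * phi \<rho> a b x) \<in> borel_measurable lborel"
    by (rule meas_Ioi[OF phi_cont])
  note R = integral_monotone_convergence_nonneg[OF int mono pos lim ilim u]
  show "set_integrable lborel {0<..} (phi \<rho> a b)" using R(1) by (simp add: set_integrable_def)
  show "(LBINT x:{0<..}. phi \<rho> a b x) = pi / a" using R(2) by (simp add: set_lebesgue_integral_def)
qed

end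


lemma exp_taylor_bound: "\<bar>exp x - 1 - x\<bar> \<le> x\<^sup>2 * exp \<bar>x\<bar>" for x :: real
proof -
  obtain t where t: "\<bar>t\<bar> \<le> \<bar>x\<bar>" "exp x = (\<Sum>m<2. (x ^ m) / fact m) + (exp t / fact 2) * x ^ 2"
    using Maclaurin_exp_le[of x 2] by blast
  have "exp x - 1 - x = exp t / 2 * x\<^sup>2" using t(2) by (simp add: numeral_2_eq_2)
  moreover have "0 \<le> exp t / 2 * x\<^sup>2" by simp
  ultimately have "\<bar>exp x - 1 - x\<bar> = exp t / 2 * x\<^sup>2" by (metis abs_of_nonneg)
  also have "\<dots> \<le> exp \<bar>x\<bar> * x\<^sup>2"
  proof -
    have "exp t \<le> exp \<bar>x\<bar>" using t(1) by (meson abs_ge_self exp_le_cancel_iff order_trans)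
    then have "exp t / 2 \<le> exp \<bar>x\<bar>" using exp_gt_zero[of t] by linarith
    then show ?thesis by (rule mult_right_mono) simp
  qed
  finally show ?thesis by (simp add: mult.commute)
qed

lemma r_exp_bound: fixes r s :: real assumes "0 < s" "0 \<le> r" shows "r * exp (- r * s) \<le> 1 / s"
proof -
  have "r * s \<le> exp (r * s)" using exp_ge_add_one_self[of "r * s"] by linarith
  then have "r * s * exp (- r * s) \<le> 1"
    by (metis exp_gt_zero exp_minus_inverse minus_mult_left mult_right_mono less_imp_le)
  then show ?thesis using assms by (simp add: field_simps)
qed

lemma r2_exp_bound: fixes r s :: real assumes "0 < s" "0 \<le> r" shows "r\<^sup>2 * exp (- r * s) \<le> 4 / s\<^sup>2"
proof -
  have p0: "0 \<le> r * exp (- r * (s/2))" using assms by simp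
  have p1: "r * exp (- r * (s/2)) \<le> 2 / s" using r_exp_bound[of "s/2" r] assms by simp
  have A: "(r * exp (- r * (s/2)))\<^sup>2 \<le> (2 / s)\<^sup>2" by (rule power_mono[OF p1 p0])
  have B: "(r * exp (- r * (s/2)))\<^sup>2 = r\<^sup>2 * exp (- r * s)"
  proof -
    have "exp (- r * (s/2)) * exp (- r * (s/2)) = exp (- r * s)" by (subst mult_exp_exp) simp
    then show ?thesis by (simp add: power2_eq_square algebra_simps)
  qed
  have C: "(2 / s)\<^sup>2 = 4 / s\<^sup>2" by (simp add: power_divide)
  show ?thesis using A B C by linarith
qed

lemma int_weight:
  fixes \<Phi> w :: "real \<Rightarrow> real"
  assumes int: "set_integrable lborel {0<..} \<Phi>" and cont: "continuous_on {0<..} \<Phi>"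
    and wc: "continuous_on {0<..} w" and bd: "\<And>r. 0 < r \<Longrightarrow> \<bar>w r\<bar> \<le> C"
  shows "set_integrable lborel {0<..} (\<lambda>r. w r * \<Phi> r)"
proof (rule set_integrable_bound[where f = "\<lambda>r. C * \<Phi> r"])
  show "set_integrable lborel {0<..} (\<lambda>r. C * \<Phi> r)" using int by auto
  show "set_borel_measurable lborel {0<..} (\<lambda>r. w r * \<Phi> r)"
    unfolding set_borel_measurable_def using meas_Ioi[of "\<lambda>r. w r * \<Phi> r"] wc cont
    by (simp add: continuous_on_mult)
  have C: "0 \<le> C" using bd[of 1] by simp
  show "AE x in lborel. x \<in> {0<..} \<longrightarrow> norm (w x * \<Phi> x) \<le> norm (C * \<Phi> x)"
  proof (rule AE_I2, rule impI)
    fix x :: real assume "x \<in> {0<..}"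
    then have "\<bar>w x\<bar> \<le> C" using bd by simp
    then show "norm (w x * \<Phi> x) \<le> norm (C * \<Phi> x)" using C
      by (simp add: abs_mult mult_right_mono)
  qed
qed

lemma laplace_deriv:
  fixes \<Phi> :: "real \<Rightarrow> real"
  assumes int: "set_integrable lborel {0<..} \<Phi>" and cont: "continuous_on {0<..} \<Phi>"
    and nn: "\<And>r. 0 < r \<Longrightarrow> 0 \<le> \<Phi> r" and t: "0 < t"
  shows "((\<lambda>s. LBINT r:{0<..}. exp (- r * s) * \<Phi> r) has_real_derivative
          - (LBINT r:{0<..}. r * exp (- r * t) * \<Phi> r)) (at t)"
proof -
  define L where "L = (\<lambda>s. LBINT r:{0<..}. exp (- r * s) * \<Phi> r)"
  define D where "D = (LBINT r:{0<..}. r * exp (- r * t) * \<Phi> r)"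
  define M where "M = (LBINT r:{0<..}. r\<^sup>2 * exp (- r * (t/2)) * \<Phi> r)"
  have IE: "set_integrable lborel {0<..} (\<lambda>r. exp (- r * s) * \<Phi> r)" if "0 < s" for s
  proof (rule int_weight[where C = 1, OF int cont])
    show "continuous_on {0<..} (\<lambda>r. exp (- r * s))" by (intro continuous_intros)
    fix r :: real assume "0 < r"
    then show "\<bar>exp (- r * s)\<bar> \<le> 1" using that by simp
  qed
  have ID: "set_integrable lborel {0<..} (\<lambda>r. r * exp (- r * t) * \<Phi> r)"
  proof (rule int_weight[where C = "1/t" and w = "\<lambda>r. r * exp (- r * t)", OF int cont])
    show "continuous_on {0<..} (\<lambda>r. r * exp (- r * t))" by (intro continuous_intros)
    fix r :: real assume "0 < r"
    then show "\<bar>r * exp (- r * t)\<bar> \<le> 1 / t" using r_exp_bound[OF t, of r] by simp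
  qed
  have IM: "set_integrable lborel {0<..} (\<lambda>r. r\<^sup>2 * exp (- r * (t/2)) * \<Phi> r)"
  proof (rule int_weight[where C = "4 / (t/2)\<^sup>2" and w = "\<lambda>r. r\<^sup>2 * exp (- r * (t/2))", OF int cont])
    show "continuous_on {0<..} (\<lambda>r. r\<^sup>2 * exp (- r * (t/2)))" by (intro continuous_intros)
    fix r :: real assume "0 < r"
    then show "\<bar>r\<^sup>2 * exp (- r * (t/2))\<bar> \<le> 4 / (t/2)\<^sup>2" using r2_exp_bound[of "t/2" r] t by simp
  qed
  have main: "eventually (\<lambda>h. norm ((L (t + h) - L t) / h - (- D)) \<le> \<bar>h\<bar> * M) (at 0)"
  proof -
    have "eventually (\<lambda>h. h \<noteq> 0 \<and> \<bar>h\<bar> < t/2) (at (0::real))"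
      unfolding eventually_at using t by (intro exI[of _ "t/2"]) (auto simp: dist_real_def)
    then show ?thesis
    proof eventually_elim
      case (elim h)
      then have h: "h \<noteq> 0" "\<bar>h\<bar> < t/2" by auto
      have Ith: "set_integrable lborel {0<..} (\<lambda>r. exp (- r * (t+h)) * \<Phi> r)" by (rule IE) (use h t in linarith)
      have It: "set_integrable lborel {0<..} (\<lambda>r. exp (- r * t) * \<Phi> r)" by (rule IE[OF t])
      define q where "q = (\<lambda>r. (1/h) * (exp (- r * (t+h)) * \<Phi> r) - (1/h) * (exp (- r * t) * \<Phi> r) + r * exp (- r * t) * \<Phi> r)"
      have Iq: "set_integrable lborel {0<..} q" unfolding q_def using Ith It ID
        by (intro set_integral_add(1) set_integral_diff(1) set_integrable_mult_right) auto
      have "(LBINT r:{0<..}. q r) = (LBINT r:{0<..}. (1/h) * (exp (- r * (t+h)) * \<Phi> r) - (1/h) * (exp (- r * t) * \<Phi> r)) + D"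
        unfolding q_def D_def by (rule set_integral_add(2)) (use Ith It ID in auto)
      also have "(LBINT r:{0<..}. (1/h) * (exp (- r * (t+h)) * \<Phi> r) - (1/h) * (exp (- r * t) * \<Phi> r)) = (1/h) * L (t+h) - (1/h) * L t"
        unfolding L_def by (subst set_integral_diff(2)) (use Ith It in auto)
      finally have Lq: "(LBINT r:{0<..}. q r) = (L (t + h) - L t) / h - (- D)" by (simp add: diff_divide_distrib)
      have bnd: "\<bar>q r\<bar> \<le> \<bar>h\<bar> * (r\<^sup>2 * exp (- r * (t/2)) * \<Phi> r)" if r: "0 < r" for r
      proof -
        have e: "exp (- r * (t+h)) = exp (- r * t) * exp (- r * h)" by (simp add: exp_add[symmetric] algebra_simps)
        have qr: "q r = exp (- r * t) * ((exp (- r * h) - 1 - (- r * h)) / h) * \<Phi> r"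
          unfolding q_def e using h by (simp add: field_simps)
        have T: "\<bar>exp (- r * h) - 1 - (- r * h)\<bar> \<le> (r * h)\<^sup>2 * exp (r * \<bar>h\<bar>)"
          using exp_taylor_bound[of "- r * h"] r by (simp add: abs_mult power2_eq_square)
        have "\<bar>q r\<bar> = exp (- r * t) * (\<bar>exp (- r * h) - 1 - (- r * h)\<bar> / \<bar>h\<bar>) * \<Phi> r"
          unfolding qr using nn[OF r] by (simp add: abs_mult)
        also have "\<dots> \<le> exp (- r * t) * ((r * h)\<^sup>2 * exp (r * \<bar>h\<bar>) / \<bar>h\<bar>) * \<Phi> r"
          using T nn[OF r] by (intro mult_right_mono mult_left_mono divide_right_mono) auto
        also have "\<dots> = \<bar>h\<bar> * (r\<^sup>2 * (exp (- r * t) * exp (r * \<bar>h\<bar>)) * \<Phi> r)"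
          using h by (simp add: power2_eq_square field_simps abs_mult_self_eq)
        also have "exp (- r * t) * exp (r * \<bar>h\<bar>) \<le> exp (- r * (t/2))"
        proof -
          have "r * \<bar>h\<bar> \<le> r * (t/2)" using h r by (intro mult_left_mono) auto
          then have "- r * t + r * \<bar>h\<bar> \<le> - r * (t/2)" by simp
          then show ?thesis by (simp add: mult_exp_exp)
        qed
        then have "\<bar>h\<bar> * (r\<^sup>2 * (exp (- r * t) * exp (r * \<bar>h\<bar>)) * \<Phi> r) \<le> \<bar>h\<bar> * (r\<^sup>2 * exp (- r * (t/2)) * \<Phi> r)"
          using nn[OF r] by (intro mult_left_mono mult_right_mono) auto
        finally show ?thesis .
      qed
      have IB: "set_integrable lborel {0<..} (\<lambda>r. \<bar>h\<bar> * (r\<^sup>2 * exp (- r * (t/2)) * \<Phi> r))"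
        using IM by auto
      have up: "(LBINT r:{0<..}. q r) \<le> (LBINT r:{0<..}. \<bar>h\<bar> * (r\<^sup>2 * exp (- r * (t/2)) * \<Phi> r))"
        by (rule set_integral_mono[OF Iq IB]) (use bnd in \<open>fastforce dest: abs_le_D1\<close>)
      have "(LBINT r:{0<..}. (-1) * q r) \<le> (LBINT r:{0<..}. \<bar>h\<bar> * (r\<^sup>2 * exp (- r * (t/2)) * \<Phi> r))"
      proof (rule set_integral_mono[OF _ IB])
        show "set_integrable lborel {0<..} (\<lambda>r. (-1) * q r)"
          by (rule set_integrable_mult_right) (use Iq in auto)
      qed (use bnd in \<open>auto dest: abs_le_D2\<close>)
      moreover have "(LBINT r:{0<..}. (-1) * q r) = - (LBINT r:{0<..}. q r)"
        using set_integral_mult_right[where a="-1::real" and M=lborel and A="{0<..}" and f=q] by simp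
      ultimately have lo: "- (LBINT r:{0<..}. q r) \<le> (LBINT r:{0<..}. \<bar>h\<bar> * (r\<^sup>2 * exp (- r * (t/2)) * \<Phi> r))"
        by linarith
      have MM: "(LBINT r:{0<..}. \<bar>h\<bar> * (r\<^sup>2 * exp (- r * (t/2)) * \<Phi> r)) = \<bar>h\<bar> * M"
        unfolding M_def by (rule set_integral_mult_right)
      have "\<bar>(LBINT r:{0<..}. q r)\<bar> \<le> \<bar>h\<bar> * M" using up lo unfolding MM by arith
      then show ?case unfolding Lq real_norm_def .
    qed
  qed
  have g: "((\<lambda>h. \<bar>h\<bar> * M) \<longlongrightarrow> 0) (at (0::real))"
  proof -
    have "((\<lambda>h::real. \<bar>h\<bar> * M) \<longlongrightarrow> \<bar>0\<bar> * M) (at 0)"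
      by (intro tendsto_intros)
    then show ?thesis by simp
  qed
  have "((\<lambda>h. (L (t + h) - L t) / h - (- D)) \<longlongrightarrow> 0) (at 0)"
    by (rule Lim_null_comparison[OF main g])
  then have "((\<lambda>h. (L (t + h) - L t) / h) \<longlongrightarrow> - D) (at 0)"
    by (rule LIM_zero_cancel)
  then have "(L has_real_derivative - D) (at t)" by (simp add: DERIV_def)
  then show ?thesis unfolding L_def D_def .
qed


theorem lemma2p3:
  fixes \<rho> \<gamma> lam :: real
  assumes "0 < \<rho>" "\<rho> < 1" "0 < \<gamma>" "0 < lam"
  shows "A_rho \<rho> \<gamma> lam 0 = 1
    \<and> (\<forall>t>0. 0 < A_rho \<rho> \<gamma> lam t \<and> A_rho \<rho> \<gamma> lam t < 1)
    \<and> (\<forall>t>0. \<exists>D. ((\<lambda>s. A_rho \<rho> \<gamma> lam s) has_real_derivative D) (at t) \<and> D < 0)"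
proof -
  have rho: "0 < \<rho>" "\<rho> < 1" using assms by auto
  have ab: "0 < lam" "0 < lam * \<gamma>" using assms by auto
  have g: "0 < \<gamma>" using assms by auto
  define \<Phi> where "\<Phi> = (\<lambda>r. (lam / \<gamma>) * phi \<rho> lam (lam * \<gamma>) r)"
  have ieq: "exp (- r * t) * (lam\<^sup>2 * r powr (\<rho> - 1) * sin (\<rho> * pi)) /
        ((- r + lam * \<gamma> * r powr \<rho> * cos (\<rho> * pi) + lam)\<^sup>2
          + (lam * \<gamma> * r powr \<rho> * sin (\<rho> * pi))\<^sup>2) = exp (- r * t) * \<Phi> r" for r t
  proof -
    have gen: "exp E * (lam\<^sup>2 * P * S) / Dn = exp E * (lam / \<gamma> * (lam * \<gamma> * P * S / Dn))" for E P S Dn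
    proof -
      have k: "lam / \<gamma> * (lam * \<gamma> * P * S) = lam\<^sup>2 * P * S" using g by (simp add: field_simps power2_eq_square)
      show ?thesis by (simp only: times_divide_eq_right k)
    qed
    show ?thesis unfolding \<Phi>_def phi_def[OF rho ab] by (rule gen)
  qed
  have Aeq: "A_rho \<rho> \<gamma> lam t = \<gamma> / pi * (LBINT r:{0<..}. exp (- r * t) * \<Phi> r)" for t
    unfolding A_rho_def ieq ..
  have Iphi: "set_integrable lborel {0<..} \<Phi>"
    unfolding \<Phi>_def using phi_integral(1)[OF rho ab] by auto
  have Cphi: "continuous_on {0<..} \<Phi>"
    unfolding \<Phi>_def using phi_cont[OF rho ab] by (intro continuous_intros)
  have Pphi: "0 < \<Phi> r" if "0 < r" for r
    unfolding \<Phi>_def using phi_pos[OF rho ab that] g ab by simp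
  have Lphi: "(LBINT r:{0<..}. \<Phi> r) = pi / \<gamma>"
    unfolding \<Phi>_def using phi_integral(2)[OF rho ab] g ab by simp
  have IE: "set_integrable lborel {0<..} (\<lambda>r. exp (- r * s) * \<Phi> r)" if "0 < s" for s
  proof (rule int_weight[where C = 1, OF Iphi Cphi])
    show "continuous_on {0<..} (\<lambda>r. exp (- r * s))" by (intro continuous_intros)
    fix r :: real assume "0 < r"
    then show "\<bar>exp (- r * s)\<bar> \<le> 1" using that by simp
  qed
  have A0: "A_rho \<rho> \<gamma> lam 0 = 1"
    unfolding Aeq using Lphi g by simp
  have A1: "0 < A_rho \<rho> \<gamma> lam t \<and> A_rho \<rho> \<gamma> lam t < 1" if t: "0 < t" for t
  proof
    have "0 < (LBINT r:{0<..}. exp (- r * t) * \<Phi> r)"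
      by (rule pos_integral[OF IE[OF t]]) (simp add: Pphi)
    then show "0 < A_rho \<rho> \<gamma> lam t" unfolding Aeq using g by simp
    have "0 < (LBINT r:{0<..}. \<Phi> r - exp (- r * t) * \<Phi> r)"
    proof (rule pos_integral)
      show "set_integrable lborel {0<..} (\<lambda>r. \<Phi> r - exp (- r * t) * \<Phi> r)"
        using Iphi IE[OF t] by auto
      fix r :: real assume r: "0 < r"
      have "exp (- r * t) < 1" using r t by simp
      then show "0 < \<Phi> r - exp (- r * t) * \<Phi> r" using Pphi[OF r] by simp
    qed
    also have "(LBINT r:{0<..}. \<Phi> r - exp (- r * t) * \<Phi> r) = pi / \<gamma> - (LBINT r:{0<..}. exp (- r * t) * \<Phi> r)"
      using set_integral_diff(2)[OF Iphi IE[OF t]] Lphi by simp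
    finally have "(LBINT r:{0<..}. exp (- r * t) * \<Phi> r) < pi / \<gamma>" by simp
    then have "\<gamma> / pi * (LBINT r:{0<..}. exp (- r * t) * \<Phi> r) < \<gamma> / pi * (pi / \<gamma>)"
      using g by (intro mult_strict_left_mono) auto
    then show "A_rho \<rho> \<gamma> lam t < 1" unfolding Aeq using g by simp
  qed
  have A2: "\<exists>D. ((\<lambda>s. A_rho \<rho> \<gamma> lam s) has_real_derivative D) (at t) \<and> D < 0" if t: "0 < t" for t
  proof -
    have d: "((\<lambda>s. LBINT r:{0<..}. exp (- r * s) * \<Phi> r) has_real_derivative
          - (LBINT r:{0<..}. r * exp (- r * t) * \<Phi> r)) (at t)"
      by (rule laplace_deriv[OF Iphi Cphi _ t]) (use Pphi in \<open>auto intro: less_imp_le\<close>)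
    have ID: "set_integrable lborel {0<..} (\<lambda>r. r * exp (- r * t) * \<Phi> r)"
    proof (rule int_weight[where C = "1/t" and w = "\<lambda>r. r * exp (- r * t)", OF Iphi Cphi])
      show "continuous_on {0<..} (\<lambda>r. r * exp (- r * t))" by (intro continuous_intros)
      fix r :: real assume "0 < r"
      then show "\<bar>r * exp (- r * t)\<bar> \<le> 1 / t" using r_exp_bound[OF t, of r] by simp
    qed
    have pos: "0 < (LBINT r:{0<..}. r * exp (- r * t) * \<Phi> r)"
      by (rule pos_integral[OF ID]) (simp add: Pphi)
    have "((\<lambda>s. \<gamma> / pi * (LBINT r:{0<..}. exp (- r * s) * \<Phi> r)) has_real_derivative
          \<gamma> / pi * - (LBINT r:{0<..}. r * exp (- r * t) * \<Phi> r)) (at t)"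
      by (rule DERIV_cmult[OF d])
    moreover have "(\<lambda>s. A_rho \<rho> \<gamma> lam s) = (\<lambda>s. \<gamma> / pi * (LBINT r:{0<..}. exp (- r * s) * \<Phi> r))"
      using Aeq by auto
    moreover have "\<gamma> / pi * - (LBINT r:{0<..}. r * exp (- r * t) * \<Phi> r) < 0"
      using pos g by (simp add: mult_pos_pos)
    ultimately show ?thesis by auto
  qed
  show ?thesis using A0 A1 A2 by blast
qed

end
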